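(* Let $A\in\mathbb{R}^{m\times n}$, let $X_0\in\mathbb{R}^{n\times m}$, and define iterates $$X_{k+1} = X_k - A^\top A S_k\,(S_k^\top A^\top A A^\top A S_k)^\dagger S_k^\top A^\top (A X_k - I),\qquad k\ge 0,$$ for arbitrary matrices $S_k\in\mathbb{R}^{m\times\tau}$. If $\mathrm{Range}(X_0)\subset\mathrm{Range}(A^\top A)$, then $\mathrm{Range}(X_k - A^\dagger)\subset\mathrm{Range}(A^\top A)$ for all $k$.
   Context: $M^\dagger$ denotes the Moore–Penrose pseudoinverse and $\mathrm{Range}(M)$ the column space of a real matrix $M$. *)

theory Defs
  imports "HOL-Analysis.Analysis"
begin

definition is_mp_pinv :: "real^'n^'m \<Rightarrow> real^'m^'n \<Rightarrow> bool" where
  "is_mp_pinv M P \<longleftrightarrow>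
     M ** P ** M = M \<and> P ** M ** P = P \<and>
     transpose (M ** P) = M ** P \<and> transpose (P ** M) = P ** M"

definition mp_pinv :: "real^'n^'m \<Rightarrow> real^'m^'n" where
  "mp_pinv M = (THE P. is_mp_pinv M P)"

definition col_space :: "real^'n^'m \<Rightarrow> (real^'m) set" where
  "col_space M = range (\<lambda>x. M *v x)"

end

theory Submission
  imports Defs
begin

lemma colsp_mul: "col_space (M ** N) \<subseteq> col_space M"
  unfolding col_space_def by (auto simp: matrix_vector_mul_assoc[symmetric])

lemma colsp_subspace: "subspace (col_space M)"
  unfolding col_space_def
  by (rule linear_subspace_image[OF matrix_vector_mul_linear subspace_UNIV])

lemma colsp_NNT: "col_space (N ** transpose N) = col_space (N::real^'n^'m)"
proof
  show "col_space (N ** transpose N) \<subseteq> col_space N" by (rule colsp_mul)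
next
  show "col_space N \<subseteq> col_space (N ** transpose N)"
  proof
    fix y assume "y \<in> col_space N"
    then obtain x where y: "y = N *v x" unfolding col_space_def by auto
    let ?S = "col_space (N ** transpose N)"
    have sp: "span ?S = ?S" using colsp_subspace span_eq_iff by blast
    obtain p q where p: "p \<in> span ?S" and q: "\<And>w. w \<in> span ?S \<Longrightarrow> orthogonal q w"
      and yq: "y = p + q" using orthogonal_subspace_decomp_exists[of ?S y] by metis
    have ip: "\<And>z. q \<bullet> (N *v z) = (transpose N *v q) \<bullet> z"
      by (simp add: dot_lmul_matrix)
    have "(N ** transpose N) *v q \<in> span ?S" by (rule span_base) (simp add: col_space_def)
    hence "q \<bullet> ((N ** transpose N) *v q) = 0" using q orthogonal_def by blast
    hence "(transpose N *v q) \<bullet> (transpose N *v q) = 0"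
      by (simp add: matrix_vector_mul_assoc[symmetric] ip)
    hence tq: "transpose N *v q = 0" by simp
    have "q \<bullet> y = 0" using ip tq y by simp
    moreover have "q \<bullet> p = 0" using q p orthogonal_def by blast
    ultimately have "q \<bullet> q = 0" using yq by (simp add: inner_add_right)
    hence "q = 0" by simp
    thus "y \<in> ?S" using yq p sp by simp
  qed
qed

lemma colsp_solve:
  fixes M :: "real^'k^'m" and B :: "real^'n^'m"
  assumes "col_space M \<subseteq> col_space B"
  shows "\<exists>U. B ** U = M"
proof -
  have "\<forall>j. \<exists>u. B *v u = column j M"
  proof
    fix j
    have "column j M = M *v axis j 1"
      by (simp add: column_def matrix_vector_mult_def axis_def vec_eq_iff if_distrib cong: if_cong)
    hence "column j M \<in> col_space B" using assms unfolding col_space_def by auto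
    thus "\<exists>u. B *v u = column j M" unfolding col_space_def by auto
  qed
  then obtain u where u: "\<And>j. B *v u j = column j M" by metis
  have "B ** (\<chi> i j. u j $ i) = M"
  proof -
    have "(B ** (\<chi> i j. u j $ i)) $ i $ j = M $ i $ j" for i j
    proof -
      have "(B ** (\<chi> i j. u j $ i)) $ i $ j = (B *v u j) $ i"
        by (simp add: matrix_matrix_mult_def matrix_vector_mult_def)
      also have "\<dots> = M $ i $ j" by (simp add: u column_def)
      finally show ?thesis .
    qed
    thus ?thesis by (simp add: vec_eq_iff)
  qed
  thus ?thesis by blast
qed

lemma colsp_MMTM: "col_space (M ** transpose M ** M) = col_space (M::real^'n^'m)"
proof
  show "col_space (M ** transpose M ** M) \<subseteq> col_space M"
    by (metis colsp_mul matrix_mul_assoc)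
next
  have "col_space (transpose M) \<subseteq> col_space (transpose M ** M)"
    using colsp_NNT[of "transpose M"] by simp
  then obtain Z where Z: "transpose M ** M ** Z = transpose M" using colsp_solve by blast
  have "M ** transpose M = (M ** transpose M ** M) ** Z"
    by (metis Z matrix_mul_assoc)
  hence "col_space (M ** transpose M) \<subseteq> col_space (M ** transpose M ** M)"
    by (metis colsp_mul)
  thus "col_space M \<subseteq> col_space (M ** transpose M ** M)" using colsp_NNT[of M] by simp
qed


lemma pinv_unique:
  fixes A :: "real^'n^'m"
  assumes p1: "is_mp_pinv A P1" and p2: "is_mp_pinv A P2"
  shows "P1 = P2"
proof -
  note T = matrix_transpose_mul matrix_mul_assoc
  from p1 have a1: "A ** P1 ** A = A" and b1: "P1 ** A ** P1 = P1"
    and c1: "transpose (A ** P1) = A ** P1" and d1: "transpose (P1 ** A) = P1 ** A"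
    unfolding is_mp_pinv_def by auto
  from p2 have a2: "A ** P2 ** A = A" and b2: "P2 ** A ** P2 = P2"
    and c2: "transpose (A ** P2) = A ** P2" and d2: "transpose (P2 ** A) = P2 ** A"
    unfolding is_mp_pinv_def by auto
  have tA: "transpose A = transpose A ** transpose P2 ** transpose A"
    using arg_cong[OF a2, of transpose] by (simp add: T)
  have tA': "transpose A = transpose A ** transpose P1 ** transpose A"
    using arg_cong[OF a1, of transpose] by (simp add: T)
  have "P1 = P1 ** (A ** P1)" using b1 by (simp add: T)
  also have "\<dots> = P1 ** transpose (A ** P1)" using c1 by simp
  also have "\<dots> = P1 ** transpose P1 ** transpose A" by (simp add: T)
  also have "\<dots> = P1 ** transpose P1 ** (transpose A ** transpose P2 ** transpose A)"
    using tA by simp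
  also have "\<dots> = P1 ** transpose (A ** P1) ** transpose (A ** P2)" by (simp add: T)
  also have "\<dots> = P1 ** (A ** P1) ** (A ** P2)" using c1 c2 by simp
  also have "\<dots> = (P1 ** A ** P1) ** A ** P2" by (simp add: T)
  also have "\<dots> = P1 ** A ** P2" using b1 by simp
  finally have e1: "P1 = P1 ** A ** P2" .
  have "P2 = (P2 ** A) ** P2" using b2 by (simp add: T)
  also have "\<dots> = transpose (P2 ** A) ** P2" using d2 by simp
  also have "\<dots> = transpose A ** transpose P2 ** P2" by (simp add: T)
  also have "\<dots> = (transpose A ** transpose P1 ** transpose A) ** transpose P2 ** P2"
    using tA' by simp
  also have "\<dots> = transpose (P1 ** A) ** transpose (P2 ** A) ** P2" by (simp add: T)
  also have "\<dots> = (P1 ** A) ** (P2 ** A) ** P2" using d1 d2 by simp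
  also have "\<dots> = P1 ** A ** (P2 ** A ** P2)" by (simp add: T)
  also have "\<dots> = P1 ** A ** P2" using b2 by simp
  finally show ?thesis using e1 by simp
qed


lemma pinv_exists:
  fixes A :: "real^'n^'m"
  shows "\<exists>P. is_mp_pinv A P \<and> col_space P \<subseteq> col_space (transpose A)"
proof -
  note T = matrix_transpose_mul matrix_mul_assoc
  let ?B = "transpose A ** A ** transpose A"
  have "col_space (transpose A) \<subseteq> col_space ?B"
    using colsp_MMTM[of "transpose A"] by simp
  then obtain U where U: "?B ** U = transpose A" using colsp_solve by blast
  have "col_space A \<subseteq> col_space (A ** transpose A ** A)"
    using colsp_MMTM[of A] by simp
  then obtain W where W: "A ** transpose A ** A ** W = A" using colsp_solve by blast
  define V where "V = transpose W"
  have V: "V ** ?B = transpose A"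
    using arg_cong[OF W, of transpose] by (simp add: T V_def)
  have U': "transpose U ** A ** transpose A ** A = A"
    using arg_cong[OF U, of transpose] by (simp add: T)
  have V': "A ** transpose A ** A ** transpose V = A"
    using arg_cong[OF V, of transpose] by (simp add: T)
  define P where "P = transpose A ** U"
  have PV: "P = V ** transpose A"
  proof -
    have "P = V ** ?B ** U" unfolding P_def using V by simp
    also have "\<dots> = V ** (?B ** U)" by (simp add: T)
    finally show ?thesis using U by simp
  qed
  have AU: "A ** transpose A ** A ** transpose A ** U = A ** transpose A"
    using arg_cong[OF U, of "\<lambda>X. A ** X"] by (simp add: T)
  have VA: "V ** transpose A ** A ** transpose A ** A = transpose A ** A"
    using arg_cong[OF V, of "\<lambda>X. X ** A"] by (simp add: T)
  have c: "transpose (A ** P) = A ** P"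
  proof -
    have 1: "transpose U ** A ** transpose A ** A ** transpose A ** U = A ** P"
      using U' by (simp add: T P_def)
    have "transpose U ** A ** transpose A ** A ** transpose A ** U = transpose U ** (A ** transpose A ** A ** transpose A ** U)"
      by (simp add: T)
    also have "\<dots> = transpose (A ** P)" using AU by (simp add: T P_def)
    finally show ?thesis using 1 by simp
  qed
  have d: "transpose (P ** A) = P ** A"
  proof -
    have 1: "V ** transpose A ** A ** transpose A ** A ** transpose V = transpose (P ** A)"
      using VA by (simp add: T PV)
    have "V ** transpose A ** A ** transpose A ** A ** transpose V = V ** transpose A ** (A ** transpose A ** A ** transpose V)"
      by (simp add: T)
    also have "\<dots> = P ** A" using V' by (simp add: T PV)
    finally show ?thesis using 1 by simp
  qed
  have a: "A ** P ** A = A"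
  proof -
    have "A ** P ** A = transpose (A ** P) ** A" using c by simp
    also have "\<dots> = transpose U ** A ** transpose A ** A" by (simp add: T P_def)
    finally show ?thesis using U' by simp
  qed
  have b: "P ** A ** P = P"
  proof -
    have "P ** A ** P = (V ** transpose A) ** A ** (transpose A ** U)"
      using PV P_def by metis
    also have "\<dots> = V ** (transpose A ** A ** transpose A ** U)" by (simp add: T)
    also have "\<dots> = V ** transpose A" using U by simp
    finally show ?thesis using PV by simp
  qed
  have "col_space P \<subseteq> col_space (transpose A)" unfolding P_def by (rule colsp_mul)
  thus ?thesis using a b c d unfolding is_mp_pinv_def by blast
qed


lemma colsp_diff:
  assumes "col_space M \<subseteq> C" "col_space N \<subseteq> C" "subspace C"
  shows "col_space (M - N) \<subseteq> C"
proof
  fix y assume "y \<in> col_space (M - N)"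
  then obtain x where "y = (M - N) *v x" unfolding col_space_def by auto
  hence "y = M *v x - N *v x" by (simp add: matrix_vector_mult_diff_rdistrib)
  moreover have "M *v x \<in> C" "N *v x \<in> C" using assms unfolding col_space_def by auto
  ultimately show "y \<in> C" using assms(3) subspace_diff by blast
qed

theorem lemma3:
  fixes A :: "real^'n^'m"
    and S :: "nat \<Rightarrow> real^'tau^'n"
    and X :: "nat \<Rightarrow> real^'m^'n"
  assumes iter: "\<And>k. X (Suc k) = X k -
      transpose A ** A ** S k **
      mp_pinv (transpose (S k) ** transpose A ** A ** transpose A ** A ** S k) **
      transpose (S k) ** transpose A ** (A ** X k - mat 1)"
    and init: "col_space (X 0) \<subseteq> col_space (transpose A ** A)"
  shows "\<forall>k. col_space (X k - mp_pinv A) \<subseteq> col_space (transpose A ** A)"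
proof
  let ?C = "col_space (transpose A ** A)"
  obtain P where P: "is_mp_pinv A P" and PC: "col_space P \<subseteq> col_space (transpose A)"
    using pinv_exists by blast
  have mp: "mp_pinv A = P" unfolding mp_pinv_def
    using P pinv_unique by blast
  have eqC: "col_space (transpose A) = ?C" using colsp_NNT[of "transpose A"] by simp
  have sub: "subspace ?C" by (rule colsp_subspace)
  fix k
  show "col_space (X k - mp_pinv A) \<subseteq> ?C"
  proof (induction k)
    case 0
    show ?case unfolding mp using colsp_diff[OF init _ sub] PC eqC by blast
  next
    case (Suc k)
    let ?Q = "S k **
      mp_pinv (transpose (S k) ** transpose A ** A ** transpose A ** A ** S k) **
      transpose (S k) ** transpose A ** (A ** X k - mat 1)"
    have eq: "X (Suc k) - mp_pinv A = (X k - mp_pinv A) - (transpose A ** A) ** ?Q"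
      by (simp add: iter matrix_mul_assoc)
    show ?case unfolding eq by (rule colsp_diff[OF Suc.IH colsp_mul sub])
  qed
qed

end
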